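(* Let $p$ be a prime, $d\ge1$, and $w:\mathbb{Z}_p^d\to[0,\infty)$, not identically zero, with $\operatorname{supp}(w)=E$. If some $B\subseteq\mathbb{Z}_p^d$ is a spectrum for $L^2(w)$, then $w=c\,1_E$ for some constant $c>0$.
   Context: $\mathbb{Z}_p^d$ is the $d$-dimensional vector space over the field $\mathbb{Z}_p$, $x\cdot b=\sum_i x_ib_i$, $\chi(t)=e^{2\pi i t/p}$. $1_E$ is the indicator of $E$. For $w:\mathbb{Z}_p^d\to[0,\infty)$, $\operatorname{supp}(w)=\{x:w(x)>0\}$ and $L^2(w)$ is the space of functions on $\operatorname{supp}(w)$ with inner product $\langle f,h\rangle_w=\sum_{x}f(x)\overline{h(x)}w(x)$. A set $B\subseteq\mathbb{Z}_p^d$ is a spectrum for $L^2(w)$ if the functions $\chi_b(x)=\chi(x\cdot b)$, $b\in B$, form an orthogonal basis of $L^2(w)$: $\sum_x\chi(x\cdot(b-b'))w(x)=0$ for all distinct $b,b'\in B$, and every function on $\operatorname{supp}(w)$ is a linear combination of the $\chi_b$ restricted to $\operatorname{supp}(w)$. *)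

theory Defs
  imports "HOL-Computational_Algebra.Primes" "HOL-Library.Indicator_Function"
begin

text \<open>Elements of Z_p^d are represented as functions nat => int with coordinates i < d
  in {0..<p} and all other coordinates 0.\<close>

definition vecs :: "nat \<Rightarrow> nat \<Rightarrow> (nat \<Rightarrow> int) set" where
  "vecs p d = {x. (\<forall>i<d. 0 \<le> x i \<and> x i < int p) \<and> (\<forall>i\<ge>d. x i = 0)}"

definition dotp :: "nat \<Rightarrow> (nat \<Rightarrow> int) \<Rightarrow> (nat \<Rightarrow> int) \<Rightarrow> int" where
  "dotp d x b = (\<Sum>i<d. x i * b i)"

text \<open>chi(t) = exp(2 pi i t / p); it is p-periodic, so integer representatives may be used.\<close>
definition chi :: "nat \<Rightarrow> int \<Rightarrow> complex" where
  "chi p t = exp (2 * of_real pi * \<i> * of_int t / of_nat p)"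

definition supp_w :: "nat \<Rightarrow> nat \<Rightarrow> ((nat \<Rightarrow> int) \<Rightarrow> real) \<Rightarrow> (nat \<Rightarrow> int) set" where
  "supp_w p d w = {x \<in> vecs p d. w x > 0}"

definition is_spectrum :: "nat \<Rightarrow> nat \<Rightarrow> ((nat \<Rightarrow> int) \<Rightarrow> real) \<Rightarrow> (nat \<Rightarrow> int) set \<Rightarrow> bool" where
  "is_spectrum p d w B \<longleftrightarrow>
     B \<subseteq> vecs p d \<and>
     (\<forall>b\<in>B. \<forall>b'\<in>B. b \<noteq> b' \<longrightarrow>
        (\<Sum>x\<in>vecs p d. chi p (dotp d x b - dotp d x b') * of_real (w x)) = 0) \<and>
     (\<forall>f :: (nat \<Rightarrow> int) \<Rightarrow> complex. \<exists>a :: (nat \<Rightarrow> int) \<Rightarrow> complex.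
        \<forall>x\<in>supp_w p d w. f x = (\<Sum>b\<in>B. a b * chi p (dotp d x b)))"

end

theory Submission
  imports Defs
begin

lemma chi_add: "chi p a * chi p b = chi p (a + b)"
  unfolding chi_def by (simp add: exp_add[symmetric] add_divide_distrib distrib_left distrib_right)

lemma chi_cis: "chi p a = cis (2 * pi * of_int a / of_nat p)"
  unfolding chi_def cis_conv_exp by (simp add: mult_ac)

lemma chi_cnj: "cnj (chi p a) = chi p (- a)"
  unfolding chi_cis cis_cnj by simp

lemma chi_zero: "chi p 0 = 1"
  unfolding chi_def by simp

lemma chi_norm: "chi p a * cnj (chi p a) = 1"
  by (simp add: chi_cnj chi_add chi_zero)

lemma finite_vecs: "finite (vecs p d)"
proof -
  let ?F = "\<lambda>g::nat\<Rightarrow>int. \<lambda>i. if i < d then g i else 0"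
  have "vecs p d \<subseteq> ?F ` (PiE {..<d} (\<lambda>_. {0..<int p}))"
  proof
    fix x assume x: "x \<in> vecs p d"
    have "x = ?F (restrict x {..<d})" using x by (auto simp: vecs_def)
    moreover have "restrict x {..<d} \<in> PiE {..<d} (\<lambda>_. {0..<int p})"
      using x by (auto simp: vecs_def)
    ultimately show "x \<in> ?F ` (PiE {..<d} (\<lambda>_. {0..<int p}))" by blast
  qed
  thus ?thesis by (rule finite_subset) (intro finite_imageI finite_PiE; simp)
qed

theorem lemma4p2:
  fixes p d :: nat and w :: "(nat \<Rightarrow> int) \<Rightarrow> real" and B :: "(nat \<Rightarrow> int) set"
  assumes "prime p" and "d \<ge> 1"
    and "\<forall>x\<in>vecs p d. w x \<ge> 0"
    and "\<exists>x\<in>vecs p d. w x \<noteq> 0"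
    and "is_spectrum p d w B"
  shows "\<exists>c>0. \<forall>x\<in>vecs p d. w x = c * indicator (supp_w p d w) x"
proof -
  let ?V = "vecs p d"
  let ?E = "supp_w p d w"
  let ?W = "\<lambda>x. complex_of_real (w x)"
  let ?c = "\<lambda>x b. chi p (dotp d x b)"
  define S where "S = (\<Sum>x\<in>?V. w x)"
  have finV: "finite ?V" by (rule finite_vecs)
  have BV: "B \<subseteq> ?V" and orth: "\<And>b b'. b \<in> B \<Longrightarrow> b' \<in> B \<Longrightarrow> b \<noteq> b' \<Longrightarrow>
        (\<Sum>x\<in>?V. chi p (dotp d x b - dotp d x b') * ?W x) = 0"
    and span: "\<And>f. \<exists>a. \<forall>x\<in>?E. f x = (\<Sum>b\<in>B. a b * ?c x b)"
    using assms(5) unfolding is_spectrum_def by blast+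
  have finB: "finite B" using finV BV finite_subset by blast
  have key: "w y = S / card B" if yE: "y \<in> ?E" for y
  proof -
    have yV: "y \<in> ?V" using yE by (simp add: supp_w_def)
    define f :: "(nat\<Rightarrow>int) \<Rightarrow> complex" where "f = (\<lambda>x. if x = y then 1 else 0)"
    obtain a where a: "\<forall>x\<in>?E. f x = (\<Sum>b\<in>B. a b * ?c x b)" using span by blast
    have fw: "f x * ?W x = (\<Sum>b\<in>B. a b * ?c x b) * ?W x" if "x \<in> ?V" for x
    proof (cases "x \<in> ?E")
      case True then show ?thesis using a by simp
    next
      case False
      then have "w x = 0" using that assms(3) by (force simp: supp_w_def)
      then show ?thesis by simp
    qed
    have ab: "a b' * complex_of_real S = cnj (?c y b') * ?W y" if b'B: "b' \<in> B" for b'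
    proof -
      have "(\<Sum>x\<in>?V. f x * ?W x * cnj (?c x b')) = cnj (?c y b') * ?W y"
      proof -
        have "(\<Sum>x\<in>?V. f x * ?W x * cnj (?c x b')) = (\<Sum>x\<in>?V. if x = y then cnj (?c y b') * ?W y else 0)"
          by (rule sum.cong[OF refl]) (simp add: f_def)
        also have "\<dots> = cnj (?c y b') * ?W y" using yV finV by (simp add: sum.delta)
        finally show ?thesis .
      qed
      moreover have "(\<Sum>x\<in>?V. f x * ?W x * cnj (?c x b'))
          = (\<Sum>x\<in>?V. \<Sum>b\<in>B. a b * (chi p (dotp d x b - dotp d x b') * ?W x))"
      proof (rule sum.cong[OF refl])
        fix x assume "x \<in> ?V"
        then have "f x * ?W x * cnj (?c x b') = (\<Sum>b\<in>B. a b * ?c x b) * ?W x * cnj (?c x b')"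
          using fw by simp
        also have "\<dots> = (\<Sum>b\<in>B. a b * (?c x b * cnj (?c x b') * ?W x))"
          by (simp add: sum_distrib_right sum_distrib_left mult_ac)
        also have "\<dots> = (\<Sum>b\<in>B. a b * (chi p (dotp d x b - dotp d x b') * ?W x))"
          by (simp add: chi_cnj chi_add)
        finally show "f x * ?W x * cnj (?c x b') = \<dots>" .
      qed
      moreover have "\<dots> = (\<Sum>b\<in>B. a b * (\<Sum>x\<in>?V. chi p (dotp d x b - dotp d x b') * ?W x))"
        by (subst sum.swap) (simp add: sum_distrib_left)
      moreover have "\<dots> = (\<Sum>b\<in>B. if b = b' then a b' * complex_of_real S else 0)"
      proof (rule sum.cong[OF refl])
        fix b assume bB: "b \<in> B"
        show "a b * (\<Sum>x\<in>?V. chi p (dotp d x b - dotp d x b') * ?W x)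
             = (if b = b' then a b' * complex_of_real S else 0)"
          using orth[OF bB b'B] by (auto simp: chi_zero S_def)
      qed
      moreover have "\<dots> = a b' * complex_of_real S" using finB b'B by (simp add: sum.delta)
      ultimately show ?thesis by simp
    qed
    have Spos: "S > 0"
    proof -
      have "w y \<le> S" unfolding S_def
        using member_le_sum[of y ?V w] yV finV assms(3) by auto
      moreover have "w y > 0" using yE by (simp add: supp_w_def)
      ultimately show ?thesis by simp
    qed
    have "1 = f y" by (simp add: f_def)
    also have "\<dots> = (\<Sum>b\<in>B. a b * ?c y b)" using a yE by simp
    also have "\<dots> = (\<Sum>b\<in>B. ?W y / complex_of_real S)"
    proof (rule sum.cong[OF refl])
      fix b assume "b \<in> B"
      from ab[OF this] have "a b = cnj (?c y b) * ?W y / complex_of_real S"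
        using Spos by (simp add: field_simps)
      then show "a b * ?c y b = ?W y / complex_of_real S"
        using chi_norm[of p "dotp d y b"] by (simp add: mult_ac)
    qed
    also have "\<dots> = of_nat (card B) * ?W y / complex_of_real S" by simp
    finally have "complex_of_real (real (card B) * w y) = complex_of_real S"
      using Spos by (simp add: field_simps)
    then have "real (card B) * w y = S" using of_real_eq_iff by blast
    then show ?thesis using Spos by (cases "card B = 0") (auto simp: field_simps)
  qed
  obtain y where yV: "y \<in> ?V" and "w y \<noteq> 0" using assms(4) by blast
  then have yE: "y \<in> ?E" using assms(3) by (force simp: supp_w_def)
  then have pos: "S / card B > 0" using key[OF yE] by (simp add: supp_w_def)
  show ?thesis
  proof (intro exI[of _ "S / card B"] conjI pos ballI)
    fix x assume xV: "x \<in> ?V"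
    show "w x = S / card B * indicator ?E x"
    proof (cases "x \<in> ?E")
      case True then show ?thesis using key by simp
    next
      case False then show ?thesis using xV assms(3) by (force simp: supp_w_def)
    qed
  qed
qed

end
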